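(* Let $g_1,\dots,g_\ell,h_1,\dots,h_m\in\mathbb{R}[x]=\mathbb{R}[x_1,\dots,x_n]$, $g_0=1$, $S=\{x: g_i(x)\ge0,\ i=1,\dots,\ell\}$, $I=\langle h_1,\dots,h_m\rangle$, $K=S\cap\mathcal{V}(I)$, and suppose $\mathcal{I}(K)=I$. Fix an integer $k$ with $k\ge \deg g_i$ and $k\ge\deg h_j$ for all $i,j$, let $d_i=\max\{d\in\mathbb{N}: 2d+\deg g_i\le k\}$, $e_j=k-\deg h_j$, $\Lambda(d)=\{\alpha\in\mathbb{N}^n:|\alpha|\le d\}$, $X=\prod_{i=0}^\ell\mathbb{R}[x]_{d_i}^{\Lambda(d_i)}\times\prod_{j=1}^m\mathbb{R}[x]_{e_j}$, and $\phi:X\to\mathbb{R}[x]$, $\phi\big((q_{0\alpha})_{\alpha\in\Lambda(d_0)},\dots,(q_{\ell\alpha})_{\alpha\in\Lambda(d_\ell)},r_1,\dots,r_m\big)=\sum_{i=0}^\ell\sum_{\alpha\in\Lambda(d_i)}q_{i\alpha}^2g_i+\sum_{j=1}^m r_jh_j$. Then for $q\in X$, $\phi(q)\in I$ if and only if $q_{i\alpha}\in(I:\langle g_i\rangle)=\{s\in\mathbb{R}[x]: sg_i\in I\}$ for all $\alpha\in\Lambda(d_i)$ and all $i=0,1,\dots,\ell$.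
   Context: $\mathbb{R}[x]_d$ denotes real polynomials of degree at most $d$. $\mathcal{V}(I)=\{x\in\mathbb{R}^n:p(x)=0\ \forall p\in I\}$ and $\mathcal{I}(K)=\{p\in\mathbb{R}[x]: p|_K=0\}$. *)

theory Defs
  imports "HOL-Analysis.Analysis" "HOL-Library.Poly_Mapping"
begin

text \<open>Real multivariate polynomials in the variables indexed by a finite type 'n
  (so R[x_1,...,x_n] with n = CARD('n)): finitely supported maps from monomials
  (exponent vectors 'n =>0 nat) to real coefficients; multiplication is the
  library's convolution product, giving a commutative ring.\<close>

type_synonym 'n mpoly = "('n \<Rightarrow>\<^sub>0 nat) \<Rightarrow>\<^sub>0 real"

definition mon_deg :: "('n::finite \<Rightarrow>\<^sub>0 nat) \<Rightarrow> nat" where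
  "mon_deg \<alpha> = (\<Sum>i\<in>UNIV. Poly_Mapping.lookup \<alpha> i)"

text \<open>Total degree (the zero polynomial gets degree 0 by convention).\<close>
definition total_deg :: "'n::finite mpoly \<Rightarrow> nat" where
  "total_deg p = Max (insert 0 (mon_deg ` Poly_Mapping.keys p))"

definition mpoly_eval :: "'n::finite mpoly \<Rightarrow> real ^ 'n \<Rightarrow> real" where
  "mpoly_eval p x = (\<Sum>\<alpha>\<in>Poly_Mapping.keys p. Poly_Mapping.lookup p \<alpha> * (\<Prod>i\<in>UNIV. (x $ i) ^ Poly_Mapping.lookup \<alpha> i))"

definition polys_deg_le :: "nat \<Rightarrow> 'n::finite mpoly set" where
  "polys_deg_le d = {p. total_deg p \<le> d}"

definition Lambda :: "nat \<Rightarrow> ('n::finite \<Rightarrow>\<^sub>0 nat) set" where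
  "Lambda d = {\<alpha>. mon_deg \<alpha> \<le> d}"

definition ideal_gen :: "nat \<Rightarrow> (nat \<Rightarrow> 'n::finite mpoly) \<Rightarrow> 'n mpoly set" where
  "ideal_gen m h = {p. \<exists>a. p = (\<Sum>j\<in>{1..m}. a j * h j)}"

definition zero_set :: "'n::finite mpoly set \<Rightarrow> (real ^ 'n) set" where
  "zero_set I = {x. \<forall>p\<in>I. mpoly_eval p x = 0}"

definition vanishing_ideal :: "(real ^ 'n) set \<Rightarrow> 'n::finite mpoly set" where
  "vanishing_ideal K = {p. \<forall>x\<in>K. mpoly_eval p x = 0}"

definition colon_ideal :: "'n::finite mpoly set \<Rightarrow> 'n mpoly \<Rightarrow> 'n mpoly set" where
  "colon_ideal I g = {s. s * g \<in> I}"

end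

theory Submission imports Defs begin

definition mono :: "('n::finite \<Rightarrow>\<^sub>0 nat) \<Rightarrow> real ^ 'n \<Rightarrow> real" where
  "mono \<alpha> x = (\<Prod>i\<in>UNIV. (x $ i) ^ Poly_Mapping.lookup \<alpha> i)"

lemma mono_add: "mono (\<alpha> + \<beta>) x = mono \<alpha> x * mono \<beta> x"
  by (simp add: mono_def lookup_add power_add prod.distrib)

lemma eval_superset:
  assumes "finite A" "Poly_Mapping.keys p \<subseteq> A"
  shows "mpoly_eval p x = (\<Sum>\<alpha>\<in>A. Poly_Mapping.lookup p \<alpha> * mono \<alpha> x)"
  unfolding mpoly_eval_def mono_def
  by (rule sum.mono_neutral_left) (use assms in \<open>auto simp: in_keys_iff\<close>)

lemma eval_add: "mpoly_eval (p + q) x = mpoly_eval p x + mpoly_eval q x"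
proof -
  let ?A = "Poly_Mapping.keys p \<union> Poly_Mapping.keys q"
  have f: "finite ?A" by simp
  show ?thesis
    using keys_add[of p q]
    by (simp add: eval_superset[OF f] lookup_add distrib_right sum.distrib)
qed

lemma eval_zero: "mpoly_eval 0 x = 0"
  by (simp add: mpoly_eval_def)

lemma eval_sum: "mpoly_eval (\<Sum>i\<in>S. f i) x = (\<Sum>i\<in>S. mpoly_eval (f i) x)"
  by (induction S rule: infinite_finite_induct) (auto simp: eval_zero eval_add)

lemma eval_single: "mpoly_eval (Poly_Mapping.single \<alpha> c) x = c * mono \<alpha> x"
  by (simp add: mpoly_eval_def mono_def)

lemma sum_singles: "p = (\<Sum>\<alpha>\<in>Poly_Mapping.keys p. Poly_Mapping.single \<alpha> (Poly_Mapping.lookup p \<alpha>))"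
  by (rule poly_mapping_eqI)
     (auto simp: lookup_sum lookup_single when_def in_keys_iff sum.delta' intro: sum.neutral)

lemma eval_single_mult: "mpoly_eval (Poly_Mapping.single \<alpha> c * q) x = c * mono \<alpha> x * mpoly_eval q x"
proof -
  have "Poly_Mapping.single \<alpha> c * q = (\<Sum>\<beta>\<in>Poly_Mapping.keys q. Poly_Mapping.single \<alpha> c * Poly_Mapping.single \<beta> (Poly_Mapping.lookup q \<beta>))"
    by (subst sum_singles[of q]) (simp add: sum_distrib_left)
  also have "mpoly_eval \<dots> x = (\<Sum>\<beta>\<in>Poly_Mapping.keys q. c * mono \<alpha> x * (Poly_Mapping.lookup q \<beta> * mono \<beta> x))"
    by (simp add: eval_sum mult_single eval_single mono_add mult_ac)
  finally show ?thesis
    by (simp add: sum_distrib_left[symmetric] mpoly_eval_def mono_def)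
qed

lemma eval_mult: "mpoly_eval (p * q) x = mpoly_eval p x * mpoly_eval q x"
proof -
  have "p * q = (\<Sum>\<alpha>\<in>Poly_Mapping.keys p. Poly_Mapping.single \<alpha> (Poly_Mapping.lookup p \<alpha>) * q)"
    by (subst sum_singles[of p]) (simp add: sum_distrib_right)
  then have "mpoly_eval (p * q) x = (\<Sum>\<alpha>\<in>Poly_Mapping.keys p. Poly_Mapping.lookup p \<alpha> * mono \<alpha> x * mpoly_eval q x)"
    by (simp add: eval_sum eval_single_mult)
  then show ?thesis
    by (simp add: sum_distrib_right[symmetric] mpoly_eval_def mono_def)
qed

lemma eval_one: "mpoly_eval 1 x = 1"
  by (simp add: mpoly_eval_def)

lemma finite_Lambda: "finite (Lambda d :: ('n::finite \<Rightarrow>\<^sub>0 nat) set)"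
proof -
  have "Poly_Mapping.lookup ` (Lambda d :: ('n \<Rightarrow>\<^sub>0 nat) set) \<subseteq> PiE UNIV (\<lambda>_. {0..d})"
  proof
    fix f assume "f \<in> Poly_Mapping.lookup ` (Lambda d :: ('n \<Rightarrow>\<^sub>0 nat) set)"
    then obtain \<alpha> :: "'n \<Rightarrow>\<^sub>0 nat" where a: "mon_deg \<alpha> \<le> d" "f = Poly_Mapping.lookup \<alpha>"
      by (auto simp: Lambda_def)
    have "\<And>i. Poly_Mapping.lookup \<alpha> i \<le> mon_deg \<alpha>"
      unfolding mon_deg_def by (rule member_le_sum) auto
    then have "\<And>i. Poly_Mapping.lookup \<alpha> i \<le> d" using a(1) le_trans by blast
    with a(2) show "f \<in> PiE UNIV (\<lambda>_. {0..d})" by auto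
  qed
  then have "finite (Poly_Mapping.lookup ` (Lambda d :: ('n \<Rightarrow>\<^sub>0 nat) set))"
    by (rule finite_subset) (simp add: finite_PiE)
  moreover have "inj_on Poly_Mapping.lookup (Lambda d :: ('n \<Rightarrow>\<^sub>0 nat) set)"
    by (rule inj_onI) (simp add: poly_mapping_eqI)
  ultimately show ?thesis by (rule finite_imageD)
qed

theorem lemma2p4:
  fixes g h :: "nat \<Rightarrow> 'n::finite mpoly"
    and l m k :: nat
    and d e :: "nat \<Rightarrow> nat"
    and S K :: "(real ^ 'n) set"
    and I :: "'n mpoly set"
    and q :: "nat \<Rightarrow> ('n \<Rightarrow>\<^sub>0 nat) \<Rightarrow> 'n mpoly"
    and r :: "nat \<Rightarrow> 'n mpoly"
  assumes g0: "g 0 = 1"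
    and S_def: "S = {x. \<forall>i\<in>{1..l}. mpoly_eval (g i) x \<ge> 0}"
    and I_def: "I = ideal_gen m h"
    and K_def: "K = S \<inter> zero_set I"
    and IK: "vanishing_ideal K = I"
    and kg: "\<forall>i\<in>{1..l}. total_deg (g i) \<le> k"
    and kh: "\<forall>j\<in>{1..m}. total_deg (h j) \<le> k"
    and d_def: "\<forall>i\<in>{0..l}. d i = (GREATEST dd. 2 * dd + total_deg (g i) \<le> k)"
    and e_def: "\<forall>j\<in>{1..m}. e j = k - total_deg (h j)"
    and qX: "\<forall>i\<in>{0..l}. \<forall>\<alpha>\<in>Lambda (d i). q i \<alpha> \<in> polys_deg_le (d i)"
    and rX: "\<forall>j\<in>{1..m}. r j \<in> polys_deg_le (e j)"
  shows "(\<Sum>i\<in>{0..l}. \<Sum>\<alpha>\<in>Lambda (d i). (q i \<alpha>)\<^sup>2 * g i) + (\<Sum>j\<in>{1..m}. r j * h j) \<in> I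
     \<longleftrightarrow> (\<forall>i\<in>{0..l}. \<forall>\<alpha>\<in>Lambda (d i). q i \<alpha> \<in> colon_ideal I (g i))"
proof -
  have I_eq: "I = {p. \<forall>x\<in>K. mpoly_eval p x = 0}"
    using IK by (simp add: vanishing_ideal_def)
  have hI: "h j \<in> I" if "j \<in> {1..m}" for j
  proof -
    have "(\<Sum>j'\<in>{1..m}. (if j' = j then 1 else 0) * h j') = h j"
      using that by (simp add: if_distrib[of "\<lambda>c. c * _"] cong: if_cong)
    then show ?thesis unfolding I_def ideal_gen_def by (auto intro!: exI[of _ "\<lambda>j'. if j' = j then 1 else 0"])
  qed
  have hK: "mpoly_eval (h j) x = 0" if "j \<in> {1..m}" "x \<in> K" for j x
    using hI[OF that(1)] that(2) I_eq by auto
  have gK: "mpoly_eval (g i) x \<ge> 0" if "i \<in> {0..l}" "x \<in> K" for i x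
  proof (cases "i = 0")
    case True then show ?thesis using g0 by (simp add: eval_one)
  next
    case False then show ?thesis using that by (auto simp: K_def S_def)
  qed
  have evP: "mpoly_eval ((\<Sum>i\<in>{0..l}. \<Sum>\<alpha>\<in>Lambda (d i). (q i \<alpha>)\<^sup>2 * g i) + (\<Sum>j\<in>{1..m}. r j * h j)) x
     = (\<Sum>i\<in>{0..l}. \<Sum>\<alpha>\<in>Lambda (d i). (mpoly_eval (q i \<alpha>) x)\<^sup>2 * mpoly_eval (g i) x)" if "x \<in> K" for x
    using hK[OF _ that] by (simp add: eval_add eval_sum eval_mult power2_eq_square)
  show ?thesis
  proof
    assume P: "(\<Sum>i\<in>{0..l}. \<Sum>\<alpha>\<in>Lambda (d i). (q i \<alpha>)\<^sup>2 * g i) + (\<Sum>j\<in>{1..m}. r j * h j) \<in> I"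
    show "\<forall>i\<in>{0..l}. \<forall>\<alpha>\<in>Lambda (d i). q i \<alpha> \<in> colon_ideal I (g i)"
    proof (intro ballI)
      fix i and \<alpha> :: "'n \<Rightarrow>\<^sub>0 nat" assume i: "i \<in> {0..l}" and a: "\<alpha> \<in> Lambda (d i)"
      have "mpoly_eval (q i \<alpha> * g i) x = 0" if x: "x \<in> K" for x
      proof -
        have nn: "\<And>j \<beta>. j \<in> {0..l} \<Longrightarrow> 0 \<le> (mpoly_eval (q j \<beta>) x)\<^sup>2 * mpoly_eval (g j) x"
          using gK[OF _ x] by simp
        have "(\<Sum>i\<in>{0..l}. \<Sum>\<alpha>\<in>Lambda (d i). (mpoly_eval (q i \<alpha>) x)\<^sup>2 * mpoly_eval (g i) x) = 0"
          using P x evP[OF x] I_eq by auto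
        then have "\<forall>i\<in>{0..l}. (\<Sum>\<alpha>\<in>Lambda (d i). (mpoly_eval (q i \<alpha>) x)\<^sup>2 * mpoly_eval (g i) x) = 0"
          by (subst (asm) sum_nonneg_eq_0_iff) (auto intro!: sum_nonneg nn)
        then have "(\<Sum>\<alpha>\<in>Lambda (d i). (mpoly_eval (q i \<alpha>) x)\<^sup>2 * mpoly_eval (g i) x) = 0"
          using i by blast
        then have "(mpoly_eval (q i \<alpha>) x)\<^sup>2 * mpoly_eval (g i) x = 0"
          using a i nn by (subst (asm) sum_nonneg_eq_0_iff) (auto simp: finite_Lambda)
        then show ?thesis by (simp add: eval_mult)
      qed
      then show "q i \<alpha> \<in> colon_ideal I (g i)"
        unfolding colon_ideal_def using I_eq by auto
    qed
  next
    assume Q: "\<forall>i\<in>{0..l}. \<forall>\<alpha>\<in>Lambda (d i). q i \<alpha> \<in> colon_ideal I (g i)"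
    have "mpoly_eval ((\<Sum>i\<in>{0..l}. \<Sum>\<alpha>\<in>Lambda (d i). (q i \<alpha>)\<^sup>2 * g i) + (\<Sum>j\<in>{1..m}. r j * h j)) x = 0"
      if x: "x \<in> K" for x
    proof -
      have "mpoly_eval (q i \<alpha>) x * mpoly_eval (g i) x = 0" if "i \<in> {0..l}" "\<alpha> \<in> Lambda (d i)" for i \<alpha>
        using Q that x I_eq by (auto simp: colon_ideal_def eval_mult)
      then have "(\<Sum>i\<in>{0..l}. \<Sum>\<alpha>\<in>Lambda (d i). (mpoly_eval (q i \<alpha>) x)\<^sup>2 * mpoly_eval (g i) x) = 0"
        by (intro sum.neutral ballI) (simp add: power2_eq_square)
      then show ?thesis using evP[OF x] by simp
    qed
    then show "(\<Sum>i\<in>{0..l}. \<Sum>\<alpha>\<in>Lambda (d i). (q i \<alpha>)\<^sup>2 * g i) + (\<Sum>j\<in>{1..m}. r j * h j) \<in> I"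
      using I_eq by auto
  qed
qed

end
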